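(* Let $I\subset S$ be a saturated Borel ideal, $\preceq$ any term order on the terms of $S$, and $p>q$ integers. If $I\cap\mathbb T_p$ is a segment with respect to $\preceq$, then $I\cap\mathbb T_q$ is a segment with respect to $\preceq$.
   Context: $S=K[x_0,\dots,x_n]$, $K$ algebraically closed of characteristic $0$, standard grading, $x_0<x_1<\dots<x_n$; $\mathbb T_t$ denotes the set of monomials (terms) of degree $t$. A monomial ideal is Borel if for every $t$, whenever $x^\alpha\in I\cap \mathbb T_t$ with $\alpha_j>0$ and $j<n$, also $x^\alpha x_{j+1}/x_j\in I$ (equivalently, $I\cap\mathbb T_t$ is closed under all such moves). Given a term order $\preceq$, a set $B\subseteq\mathbb T_t$ is a segment if whenever $\tau\in B$ and $\tau'\in\mathbb T_t$ with $\tau'\succ\tau$, then $\tau'\in B$. An ideal $I$ is saturated if $I=\bigcup_{h\ge0}(I:\mathfrak m^h)$ with $\mathfrak m=(x_0,\dots,x_n)$. *)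

theory Defs
  imports "HOL-Computational_Algebra.Polynomial" "HOL-Library.Poly_Mapping"
begin

text \<open>Terms (monomials) in the variables x_0,...,x_n are exponent vectors
  tau :: nat =>0 nat whose support lies in {0..n}; polynomials of
  S = K[x_0,...,x_n] are finitely supported maps from terms to coefficients
  whose support consists of such terms (multiplication = convolution).\<close>

type_synonym term_t = "nat \<Rightarrow>\<^sub>0 nat"
type_synonym 'a mpoly = "term_t \<Rightarrow>\<^sub>0 'a"

definition is_term :: "nat \<Rightarrow> term_t \<Rightarrow> bool" where
  "is_term n \<tau> \<longleftrightarrow> Poly_Mapping.keys \<tau> \<subseteq> {0..n}"

definition tdeg :: "term_t \<Rightarrow> nat" where
  "tdeg \<tau> = (\<Sum>i\<in>Poly_Mapping.keys \<tau>. Poly_Mapping.lookup \<tau> i)"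

text \<open>T_t : terms of degree t (t an integer; empty for negative t).\<close>
definition terms_of_deg :: "nat \<Rightarrow> int \<Rightarrow> term_t set" where
  "terms_of_deg n t = {\<tau>. is_term n \<tau> \<and> int (tdeg \<tau>) = t}"

definition polyring :: "nat \<Rightarrow> ('a::zero) mpoly set" where
  "polyring n = {f. \<forall>\<tau>\<in>Poly_Mapping.keys f. is_term n \<tau>}"

definition mon :: "term_t \<Rightarrow> ('a::{zero,one}) mpoly" where
  "mon \<tau> = Poly_Mapping.single \<tau> 1"

definition is_ideal :: "nat \<Rightarrow> ('a::comm_ring_1) mpoly set \<Rightarrow> bool" where
  "is_ideal n I \<longleftrightarrow> I \<subseteq> polyring n \<and> 0 \<in> I \<and>
     (\<forall>f\<in>I. \<forall>g\<in>I. f + g \<in> I) \<and>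
     (\<forall>f\<in>I. \<forall>g\<in>polyring n. g * f \<in> I)"

text \<open>Monomial ideal: an ideal generated by terms, i.e. it contains every
  term occurring in each of its elements.\<close>
definition monomial_ideal :: "nat \<Rightarrow> ('a::comm_ring_1) mpoly set \<Rightarrow> bool" where
  "monomial_ideal n I \<longleftrightarrow> is_ideal n I \<and> (\<forall>f\<in>I. \<forall>\<tau>\<in>Poly_Mapping.keys f. mon \<tau> \<in> I)"

definition ideal_terms_deg :: "nat \<Rightarrow> ('a::comm_ring_1) mpoly set \<Rightarrow> int \<Rightarrow> term_t set" where
  "ideal_terms_deg n I t = {\<tau>\<in>terms_of_deg n t. mon \<tau> \<in> I}"

definition borel_ideal :: "nat \<Rightarrow> ('a::comm_ring_1) mpoly set \<Rightarrow> bool" where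
  "borel_ideal n I \<longleftrightarrow> monomial_ideal n I \<and>
     (\<forall>t. \<forall>\<tau>\<in>ideal_terms_deg n I t. \<forall>j<n. Poly_Mapping.lookup \<tau> j > 0 \<longrightarrow>
        mon (\<tau> + Poly_Mapping.single (Suc j) 1 - Poly_Mapping.single j 1) \<in> I)"

text \<open>The irrelevant ideal m = (x_0,...,x_n) and its powers: m^h is the set of
  polynomials of S all of whose terms have degree at least h.\<close>
definition max_ideal_pow :: "nat \<Rightarrow> nat \<Rightarrow> ('a::comm_ring_1) mpoly set" where
  "max_ideal_pow n h = {g\<in>polyring n. \<forall>\<tau>\<in>Poly_Mapping.keys g. h \<le> tdeg \<tau>}"

definition ideal_colon :: "nat \<Rightarrow> ('a::comm_ring_1) mpoly set \<Rightarrow> 'a mpoly set \<Rightarrow> 'a mpoly set" where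
  "ideal_colon n I J = {f\<in>polyring n. \<forall>g\<in>J. f * g \<in> I}"

definition saturated :: "nat \<Rightarrow> ('a::comm_ring_1) mpoly set \<Rightarrow> bool" where
  "saturated n I \<longleftrightarrow> I = (\<Union>h. ideal_colon n I (max_ideal_pow n h))"

definition term_order :: "nat \<Rightarrow> (term_t \<Rightarrow> term_t \<Rightarrow> bool) \<Rightarrow> bool" where
  "term_order n le \<longleftrightarrow>
     (\<forall>a. is_term n a \<longrightarrow> le a a) \<and>
     (\<forall>a b. is_term n a \<longrightarrow> is_term n b \<longrightarrow> le a b \<longrightarrow> le b a \<longrightarrow> a = b) \<and>
     (\<forall>a b c. is_term n a \<longrightarrow> is_term n b \<longrightarrow> is_term n c \<longrightarrow> le a b \<longrightarrow> le b c \<longrightarrow> le a c) \<and>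
     (\<forall>a b. is_term n a \<longrightarrow> is_term n b \<longrightarrow> le a b \<or> le b a) \<and>
     (\<forall>a. is_term n a \<longrightarrow> le 0 a) \<and>
     (\<forall>a b c. is_term n a \<longrightarrow> is_term n b \<longrightarrow> is_term n c \<longrightarrow> le a b \<longrightarrow> le (a + c) (b + c))"

definition is_segment :: "nat \<Rightarrow> (term_t \<Rightarrow> term_t \<Rightarrow> bool) \<Rightarrow> int \<Rightarrow> term_t set \<Rightarrow> bool" where
  "is_segment n le t B \<longleftrightarrow> B \<subseteq> terms_of_deg n t \<and>
     (\<forall>\<tau>\<in>B. \<forall>\<tau>'\<in>terms_of_deg n t. (le \<tau> \<tau>' \<and> \<tau>' \<noteq> \<tau>) \<longrightarrow> \<tau>' \<in> B)"

end

theory Submission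
  imports Defs
begin

lemma tdeg_superset:
  assumes "finite A" "Poly_Mapping.keys \<tau> \<subseteq> A"
  shows "tdeg \<tau> = (\<Sum>i\<in>A. Poly_Mapping.lookup \<tau> i)"
  unfolding tdeg_def
  by (rule sum.mono_neutral_left) (use assms in \<open>auto simp: in_keys_iff\<close>)

lemma tdeg_add: "tdeg (a + b) = tdeg a + tdeg b"
proof -
  let ?A = "Poly_Mapping.keys a \<union> Poly_Mapping.keys b"
  have f: "finite ?A" by simp
  have "tdeg (a + b) = (\<Sum>i\<in>?A. Poly_Mapping.lookup (a+b) i)"
    using keys_add[of a b] by (intro tdeg_superset f) auto
  also have "\<dots> = (\<Sum>i\<in>?A. Poly_Mapping.lookup a i) + (\<Sum>i\<in>?A. Poly_Mapping.lookup b i)"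
    by (simp add: lookup_add sum.distrib)
  also have "\<dots> = tdeg a + tdeg b"
    by (subst (1 2) tdeg_superset[OF f]) auto
  finally show ?thesis .
qed

lemma tdeg_single: "tdeg (Poly_Mapping.single i k) = k"
  by (subst tdeg_superset[of "{i}"]) auto

lemma is_term_add: "is_term n a \<Longrightarrow> is_term n b \<Longrightarrow> is_term n (a + b)"
  unfolding is_term_def using keys_add[of a b] by blast

lemma is_term_single: "i \<le> n \<Longrightarrow> is_term n (Poly_Mapping.single i k)"
  unfolding is_term_def by auto

lemma mon_polyring: "is_term n \<tau> \<Longrightarrow> (mon \<tau> :: 'a::comm_ring_1 mpoly) \<in> polyring n"
  unfolding polyring_def mon_def by auto

lemma single_polyring: "is_term n \<tau> \<Longrightarrow> (Poly_Mapping.single \<tau> c :: 'a::comm_ring_1 mpoly) \<in> polyring n"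
  unfolding polyring_def by auto

lemma ideal_sum:
  assumes "is_ideal n I" "finite A" "\<forall>a\<in>A. f a \<in> I"
  shows "sum f A \<in> I"
  using assms(2,3)
proof (induction A rule: finite_induct)
  case empty then show ?case using assms(1) by (simp add: is_ideal_def)
next
  case (insert x F) then show ?case using assms(1) by (simp add: is_ideal_def)
qed

lemma expand: "(\<Sum>k\<in>Poly_Mapping.keys g. Poly_Mapping.single k (Poly_Mapping.lookup g k)) = g"
proof (rule poly_mapping_eqI)
  fix k
  show "Poly_Mapping.lookup (\<Sum>k\<in>Poly_Mapping.keys g. Poly_Mapping.single k (Poly_Mapping.lookup g k)) k = Poly_Mapping.lookup g k"
    by (simp add: lookup_sum lookup_single when_def in_keys_iff)
qed

lemma borel_up:
  fixes I :: "('a::comm_ring_1) mpoly set"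
  assumes B: "borel_ideal n I" and t: "is_term n \<sigma>"
    and m0: "mon (\<sigma> + Poly_Mapping.single 0 1) \<in> I"
  shows "j \<le> n \<Longrightarrow> mon (\<sigma> + Poly_Mapping.single j 1) \<in> I"
proof (induction j)
  case 0 then show ?case using m0 by simp
next
  case (Suc j)
  let ?\<tau> = "\<sigma> + Poly_Mapping.single j 1"
  have tj: "is_term n ?\<tau>" using Suc t by (intro is_term_add is_term_single) auto
  have "?\<tau> \<in> ideal_terms_deg n I (int (tdeg ?\<tau>))"
    using Suc tj unfolding ideal_terms_deg_def terms_of_deg_def by auto
  moreover have "Poly_Mapping.lookup ?\<tau> j > 0" by (simp add: lookup_add)
  ultimately have "mon (?\<tau> + Poly_Mapping.single (Suc j) 1 - Poly_Mapping.single j 1) \<in> I"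
    using B Suc.prems unfolding borel_ideal_def by auto
  moreover have "?\<tau> + Poly_Mapping.single (Suc j) 1 - Poly_Mapping.single j 1
      = \<sigma> + Poly_Mapping.single (Suc j) 1"
    by (metis add.commute add.left_commute add_diff_cancel_left')
  ultimately show ?case by simp
qed

lemma x0_cancel:
  fixes I :: "('a::comm_ring_1) mpoly set"
  assumes B: "borel_ideal n I" and S: "saturated n I" and t: "is_term n \<sigma>"
    and m0: "mon (\<sigma> + Poly_Mapping.single 0 1) \<in> I"
  shows "mon \<sigma> \<in> I"
proof -
  have Id: "is_ideal n I" using B unfolding borel_ideal_def monomial_ideal_def by auto
  have up: "\<And>j. j \<le> n \<Longrightarrow> mon (\<sigma> + Poly_Mapping.single j 1) \<in> I"
    using borel_up[OF B t m0] by blast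
  have "mon \<sigma> \<in> ideal_colon n I (max_ideal_pow n 1)"
    unfolding ideal_colon_def
  proof (intro CollectI conjI ballI)
    show "mon \<sigma> \<in> polyring n" using t unfolding polyring_def mon_def by auto
  next
    fix g :: "'a mpoly" assume g: "g \<in> max_ideal_pow n 1"
    have "mon \<sigma> * g = (\<Sum>k\<in>Poly_Mapping.keys g. mon \<sigma> * Poly_Mapping.single k (Poly_Mapping.lookup g k))"
      by (subst (1) expand[symmetric]) (simp add: sum_distrib_left)
    also have "\<dots> \<in> I"
    proof (rule ideal_sum[OF Id], simp, intro ballI)
      fix k assume k: "k \<in> Poly_Mapping.keys g"
      have kt: "is_term n k" and kd: "1 \<le> tdeg k"
        using g k unfolding max_ideal_pow_def polyring_def by auto
      then obtain i where i: "i \<in> Poly_Mapping.keys k"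
        unfolding tdeg_def by (metis not_one_le_zero sum.empty sum.neutral in_keys_iff)
      have iln: "i \<le> n" using kt i unfolding is_term_def by auto
      define k' where "k' = k - Poly_Mapping.single i 1"
      have keq: "k = k' + Poly_Mapping.single i 1"
        unfolding k'_def
        by (rule poly_mapping_eqI) (use i in \<open>auto simp: lookup_add lookup_minus lookup_single when_def in_keys_iff\<close>)
      have "is_term n k'" using kt unfolding is_term_def k'_def
        by (auto simp: in_keys_iff lookup_minus)
      hence "Poly_Mapping.single k' (Poly_Mapping.lookup g k) * mon (\<sigma> + Poly_Mapping.single i 1) \<in> I"
        using Id up[OF iln] single_polyring unfolding is_ideal_def by blast
      moreover have "Poly_Mapping.single k' (Poly_Mapping.lookup g k) * mon (\<sigma> + Poly_Mapping.single i 1)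
          = mon \<sigma> * Poly_Mapping.single k (Poly_Mapping.lookup g k)"
        unfolding mon_def keq mult_single by (simp add: ac_simps)
      ultimately show "mon \<sigma> * Poly_Mapping.single k (Poly_Mapping.lookup g k) \<in> I" by simp
    qed
    finally show "mon \<sigma> * g \<in> I" .
  qed
  then show ?thesis using S unfolding saturated_def by blast
qed

lemma x0_cancel_pow:
  fixes I :: "('a::comm_ring_1) mpoly set"
  assumes B: "borel_ideal n I" and S: "saturated n I" and t: "is_term n \<sigma>"
  shows "mon (\<sigma> + Poly_Mapping.single 0 d) \<in> I \<Longrightarrow> mon \<sigma> \<in> I"
proof (induction d)
  case 0 then show ?case by simp
next
  case (Suc d)
  have "\<sigma> + Poly_Mapping.single 0 (Suc d) = (\<sigma> + Poly_Mapping.single 0 d) + Poly_Mapping.single 0 1"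
    by (simp add: single_add[symmetric] ac_simps)
  then show ?case using Suc x0_cancel[OF B S, of "\<sigma> + Poly_Mapping.single 0 d"] t
    by (simp add: is_term_add is_term_single)
qed

theorem mainTheorem2:
  fixes n :: nat and I :: "('a::{alg_closed_field, field_char_0}) mpoly set"
    and le :: "term_t \<Rightarrow> term_t \<Rightarrow> bool" and p q :: int
  assumes "borel_ideal n I" and "saturated n I" and "term_order n le" and "p > q"
    and "is_segment n le p (ideal_terms_deg n I p)"
  shows "is_segment n le q (ideal_terms_deg n I q)"
proof -
  have Id: "is_ideal n I" using assms(1) unfolding borel_ideal_def monomial_ideal_def by auto
  define d where "d = nat (p - q)"
  define \<rho> where "\<rho> = (Poly_Mapping.single 0 d :: term_t)"
  have \<rho>t: "is_term n \<rho>" unfolding \<rho>_def by (simp add: is_term_single)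
  have \<rho>d: "tdeg \<rho> = d" unfolding \<rho>_def by (rule tdeg_single)
  show ?thesis
    unfolding is_segment_def
  proof (intro conjI ballI impI)
    show "ideal_terms_deg n I q \<subseteq> terms_of_deg n q" unfolding ideal_terms_deg_def by auto
  next
    fix \<tau> \<tau>' assume \<tau>: "\<tau> \<in> ideal_terms_deg n I q" and \<tau>': "\<tau>' \<in> terms_of_deg n q"
      and lt: "le \<tau> \<tau>' \<and> \<tau>' \<noteq> \<tau>"
    have t1: "is_term n \<tau>" "int (tdeg \<tau>) = q" "mon \<tau> \<in> I"
      using \<tau> unfolding ideal_terms_deg_def terms_of_deg_def by auto
    have t2: "is_term n \<tau>'" "int (tdeg \<tau>') = q"
      using \<tau>' unfolding terms_of_deg_def by auto
    have pq: "int (tdeg \<tau>) + int d = p" "int (tdeg \<tau>') + int d = p"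
      using t1 t2 assms(4) unfolding d_def by auto
    have "mon \<rho> * mon \<tau> \<in> I" using Id t1 mon_polyring[OF \<rho>t] unfolding is_ideal_def by blast
    hence m1: "mon (\<tau> + \<rho>) \<in> I" unfolding mon_def by (simp add: mult_single ac_simps)
    have in1: "\<tau> + \<rho> \<in> ideal_terms_deg n I p"
      using m1 t1 \<rho>t pq unfolding ideal_terms_deg_def terms_of_deg_def
      by (simp add: is_term_add tdeg_add \<rho>d)
    have in2: "\<tau>' + \<rho> \<in> terms_of_deg n p"
      using t2 \<rho>t pq unfolding terms_of_deg_def
      by (simp add: is_term_add tdeg_add \<rho>d)
    have "le (\<tau> + \<rho>) (\<tau>' + \<rho>)"
      using assms(3) t1 t2 \<rho>t lt unfolding term_order_def by blast
    moreover have "\<tau>' + \<rho> \<noteq> \<tau> + \<rho>" using lt by simp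
    ultimately have "\<tau>' + \<rho> \<in> ideal_terms_deg n I p"
      using assms(5) in1 in2 unfolding is_segment_def by blast
    hence "mon (\<tau>' + \<rho>) \<in> I" unfolding ideal_terms_deg_def by auto
    hence "mon \<tau>' \<in> I"
      using x0_cancel_pow[OF assms(1,2) t2(1)] unfolding \<rho>_def by blast
    then show "\<tau>' \<in> ideal_terms_deg n I q" using \<tau>' unfolding ideal_terms_deg_def by auto
  qed
qed

end
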